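(* The cocharacter (coweight) lattice \(Y(G(\psi)) = \operatorname{Hom}(\mathbb{G}_m, T_{G(\psi)})\) of \(G(\psi)\) has the following \(\mathbb{Z}\)-basis \(\gamma_0^\vee, \ldots, \gamma_n^\vee\) (elements of \(Y(\mathrm{GL}(W))\otimes\mathbb{Q}\)): \[ \gamma_i^\vee = \begin{cases} \left(\frac{k}{n+1}-1\right)\tau_W^\vee + \psi(e_i^\vee), & 0\le i\le k-2,\\[2pt] \frac{k}{n+1}\,\tau_W^\vee + \psi(e_i^\vee), & k-1\le i\le n.\end{cases} \]
   Context: \(\Bbbk\) is an algebraically closed field of characteristic zero. \(V\) has basis \(e_0,\ldots,e_n\), \(1\le k\le n\), \(G=\mathrm{SL}(V)\) with diagonal maximal torus \(T_G\), \(W=\Lambda^k(V)\) with basis \(e_I=e_{i_1}\wedge\cdots\wedge e_{i_k}\) for \(I=\{i_1<\cdots<i_k\}\), and \(\psi\colon G\to\mathrm{GL}(W)\) the fundamental representation. \(G(\psi)=\psi(G)\cdot Z(\mathrm{GL}(W))\subset\mathrm{GL}(W)\), with maximal torus \(T_{G(\psi)}=\psi(T_G)\cdot Z(\mathrm{GL}(W))\) contained in the diagonal torus \(T_W\) of \(\mathrm{GL}(W)\) (w.r.t. the basis \(e_I\)); so \(Y(G(\psi))\subset Y(T_W)\simeq\mathbb{Z}^{\{I\}}\), and all these lattices sit in \(Y(T_W)\otimes\mathbb{Q}\). \(\tau_W^\vee\colon c\mapsto c\cdot\mathrm{Id}_W\) is the central cocharacter. Let \(\varepsilon_i\) be the cocharacter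 of the diagonal torus of \(\mathrm{GL}(V)\) putting \(c\) in position \(i\) and \(1\) elsewhere. Let \(\omega_j^\vee=\sum_{l<j}\varepsilon_l-\frac{j}{n+1}\sum_{l=0}^n\varepsilon_l\) (\(j=1,\dots,n\)) be the (rational) fundamental coweights of \(\mathrm{SL}(V)\), \(\omega_0^\vee=\omega_{n+1}^\vee=0\), and \(e_i^\vee=\omega_{i+1}^\vee-\omega_i^\vee=\varepsilon_i-\frac1{n+1}\sum_l\varepsilon_l\) for \(i=0,\dots,n\). \(\psi\) is extended \(\mathbb{Q}\)-linearly to rational cocharacters; explicitly \(\psi(e_i^\vee)\) acts on \(e_I\) with weight \([i\in I]-\frac{k}{n+1}\). *)

theory Defs
  imports Complex_Main "HOL-Computational_Algebra.Polynomial"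
begin

text \<open>Index set of the basis e_I of W = Lambda^k V: k-subsets of {0..n}.\<close>
definition ksubsets :: "nat \<Rightarrow> nat \<Rightarrow> nat set set" where
  "ksubsets n k = {I. I \<subseteq> {0..n} \<and> card I = k}"

text \<open>Diagonal elements of T_{G(psi)} = psi(T_G) * Z(GL(W)), as diagonal entries
  indexed by the basis e_I: psi(diag(t_0..t_n)) acts on e_I by prod_{i in I} t_i.\<close>
definition torus_Gpsi :: "nat \<Rightarrow> nat \<Rightarrow> (nat set \<Rightarrow> 'k::field) set" where
  "torus_Gpsi n k = {d. \<exists>t z. (\<forall>i\<le>n. t i \<noteq> 0) \<and> (\<Prod>i\<le>n. t i) = 1 \<and> z \<noteq> 0 \<and>
       (\<forall>I\<in>ksubsets n k. d I = z * (\<Prod>i\<in>I. t i))}"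

text \<open>Y(T_W) = Z^{I}: lam is the cocharacter c \<mapsto> diag(c^{lam I}).
  Y(G(psi)): cocharacters of T_W whose image lies in T_{G(psi)}.\<close>
definition cochar_Gpsi :: "'k::field itself \<Rightarrow> nat \<Rightarrow> nat \<Rightarrow> (nat set \<Rightarrow> int) set" where
  "cochar_Gpsi _ n k = {lam. \<forall>c::'k. c \<noteq> 0 \<longrightarrow> (\<lambda>I. c powi lam I) \<in> torus_Gpsi n k}"

text \<open>Rational cocharacters (elements of Y(T_W) tensor Q), as functions on the index set.\<close>
definition tauW :: "nat set \<Rightarrow> rat" where
  "tauW I = 1"

definition psi_e :: "nat \<Rightarrow> nat \<Rightarrow> nat \<Rightarrow> nat set \<Rightarrow> rat" where
  "psi_e n k i I = (if i \<in> I then 1 else 0) - of_nat k / of_nat (n+1)"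

definition gamma :: "nat \<Rightarrow> nat \<Rightarrow> nat \<Rightarrow> nat set \<Rightarrow> rat" where
  "gamma n k i I =
     (if i + 2 \<le> k then (of_nat k / of_nat (n+1) - 1) * tauW I + psi_e n k i I
      else (of_nat k / of_nat (n+1)) * tauW I + psi_e n k i I)"

end

theory Submission
  imports Defs
begin


lemma two_powi_inj:
  assumes "(2::'k::field_char_0) powi m = 2 powi n" shows "m = n"
proof -
  have nz: "(2::'k) \<noteq> 0" by simp
  have key: "\<And>j::nat. (2::'k) ^ j = 1 \<Longrightarrow> j = 0"
  proof -
    fix j :: nat assume "(2::'k) ^ j = 1"
    hence "(of_nat (2 ^ j)::'k) = of_nat 1" by simp
    hence "(2::nat) ^ j = 1" using of_nat_eq_iff by blast
    thus "j = 0" by simp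
  qed
  have "(2::'k) powi (m - n) = 1" using assms nz by (simp add: power_int_diff)
  show ?thesis
  proof (cases "m - n \<ge> 0")
    case True
    then have "(2::'k) ^ nat (m - n) = 1" using \<open>(2::'k) powi (m - n) = 1\<close>
      by (simp add: power_int_nonneg_exp)
    then show ?thesis using key[of "nat (m-n)"] True by simp
  next
    case False
    have "(2::'k) powi (n - m) = 1" using \<open>(2::'k) powi (m - n) = 1\<close>
      by (metis minus_diff_eq power_int_minus inverse_1)
    then have "(2::'k) ^ nat (n - m) = 1" using False
      by (simp add: power_int_nonneg_exp)
    then show ?thesis using key[of "nat (n-m)"] False by simp
  qed
qed

lemma prod_powi:
  assumes "(x::'k::field) \<noteq> 0" "finite I"
  shows "(\<Prod>i\<in>I. x powi f i) = x powi (\<Sum>i\<in>I. f i)"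
  using assms(2) by (induction I rule: finite_induct) (auto simp: power_int_add assms(1))

definition gi :: "nat \<Rightarrow> nat \<Rightarrow> nat set \<Rightarrow> int" where
  "gi k i I = (if i \<in> I then 1 else 0) - (if i + 2 \<le> k then 1 else 0)"

lemma gamma_gi: "gamma n k i I = of_int (gi k i I)"
proof -
  have "(of_nat (n+1)::rat) \<noteq> 0" by (metis of_nat_eq_0_iff add_eq_0_iff_both_eq_0 one_neq_zero)
  then show ?thesis unfolding gamma_def gi_def tauW_def psi_e_def by (auto simp: algebra_simps)
qed

lemma sum_gi:
  assumes "I \<subseteq> {0..n}" "1 \<le> k" "k \<le> n"
  shows "(\<Sum>i\<le>n. of_int (a i) * gamma n k i I) = (of_int ((\<Sum>i\<in>I. a i) - (\<Sum>i<k-1. a i)) :: rat)"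
proof -
  have "(\<Sum>i\<le>n. of_int (a i) * gamma n k i I) = (of_int (\<Sum>i\<le>n. a i * gi k i I) :: rat)"
    by (simp add: gamma_gi)
  also have "(\<Sum>i\<le>n. a i * gi k i I) = (\<Sum>i\<le>n. (if i \<in> I then a i else 0)) - (\<Sum>i\<le>n. (if i \<in> {..<k-1} then a i else 0))"
    unfolding sum_subtractf[symmetric] by (rule sum.cong) (auto simp: gi_def)
  also have "\<dots> = (\<Sum>i\<in>I. a i) - (\<Sum>i<k-1. a i)"
  proof -
    have "{..n} \<inter> I = I" using assms(1) by auto
    moreover have "{..n} \<inter> {..<k-1} = {..<k-1}" using assms by auto
    moreover have "(\<Sum>i\<le>n. (if i \<in> I then a i else 0)) = sum a ({..n} \<inter> I)"
      by (rule sum.inter_restrict[symmetric]) simp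
    moreover have "(\<Sum>i\<le>n. (if i \<in> {..<k-1} then a i else 0)) = sum a ({..n} \<inter> {..<k-1})"
      by (rule sum.inter_restrict[symmetric]) simp
    ultimately show ?thesis by simp
  qed
  finally show ?thesis .
qed

lemma ksub_finite: "I \<in> ksubsets n k \<Longrightarrow> finite I"
  unfolding ksubsets_def by (auto intro: finite_subset)

lemma cochar_rev:
  assumes alg_closed: "\<forall>p :: 'k::field_char_0 poly. degree p \<ge> 1 \<longrightarrow> (\<exists>x. poly p x = 0)"
    and lamf: "\<forall>I\<in>ksubsets n k. lam I = (\<Sum>i\<in>I. b i) + C"
  shows "lam \<in> cochar_Gpsi TYPE('k) n k"
  unfolding cochar_Gpsi_def
proof (intro CollectI allI impI)
  fix c :: 'k assume c: "c \<noteq> 0"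
  define w where "w = c powi (- (\<Sum>i\<le>n. b i))"
  have w0: "w \<noteq> 0" using c by (simp add: w_def)
  define p where "p = monom (1::'k) (Suc n) + [:-w:]"
  have "degree p = Suc n" unfolding p_def
    by (subst degree_add_eq_left) (simp_all add: degree_monom_eq)
  then obtain s where "poly p s = 0" using alg_closed[rule_format, of p] by auto
  moreover have "poly p s = s ^ Suc n - w" by (simp add: p_def poly_monom)
  ultimately have sw: "s ^ Suc n = w" by (metis eq_iff_diff_eq_0)
  have s0: "s \<noteq> 0" using sw w0 by auto
  define t where "t = (\<lambda>i. c powi b i * s)"
  define z where "z = c powi C * inverse (s ^ k)"
  have "(\<Prod>i\<le>n. t i) = (\<Prod>i\<le>n. c powi b i) * s ^ Suc n"
    by (simp add: t_def prod.distrib)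
  also have "\<dots> = c powi (\<Sum>i\<le>n. b i) * w" using prod_powi[OF c finite_atMost[of n], of b] sw by simp
  also have "\<dots> = 1" unfolding w_def power_int_minus using c by (intro right_inverse power_int_not_zero) simp
  finally have tp: "(\<Prod>i\<le>n. t i) = 1" .
  show "(\<lambda>I. c powi lam I) \<in> torus_Gpsi n k"
    unfolding torus_Gpsi_def
  proof (intro CollectI exI[of _ t] exI[of _ z] conjI ballI allI impI)
    show "t i \<noteq> 0" for i using c s0 by (simp add: t_def)
    show "(\<Prod>i\<le>n. t i) = 1" by (rule tp)
    show "z \<noteq> 0" using c s0 by (simp add: z_def)
    fix I assume I: "I \<in> ksubsets n k"
    have fI: "finite I" using I by (rule ksub_finite)
    have cI: "card I = k" using I by (simp add: ksubsets_def)
    have "z * (\<Prod>i\<in>I. t i) = c powi C * inverse (s ^ k) * ((\<Prod>i\<in>I. c powi b i) * s ^ k)"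
      unfolding z_def t_def prod.distrib using cI by simp
    also have "\<dots> = c powi C * (\<Prod>i\<in>I. c powi b i)" using s0 by simp
    also have "\<dots> = c powi C * c powi (\<Sum>i\<in>I. b i)" using prod_powi[OF c fI, of b] by simp
    also have "\<dots> = c powi lam I" using lamf I c by (simp add: power_int_add)
    finally show "c powi lam I = z * (\<Prod>i\<in>I. t i)" by simp
  qed
qed



lemma exS:
  assumes "1 \<le> k" "k \<le> n" "i < n"
  shows "\<exists>S. S \<subseteq> {0..<n} - {i} \<and> card S = k - 1 \<and> finite S"
proof -
  have "card ({0..<n} - {i}) = n - 1" using assms by simp
  then have "k - 1 \<le> card ({0..<n} - {i})" using assms by simp
  then show ?thesis by (meson obtain_subset_with_card_n)
qed

lemma insert_ksub:
  assumes "1 \<le> k" "k \<le> n" "S \<subseteq> {0..<n} - {i}" "card S = k - 1" "finite S" "j \<le> n" "j \<notin> S"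
  shows "insert j S \<in> ksubsets n k"
  using assms unfolding ksubsets_def by auto

lemma cochar_fwd:
  assumes "1 \<le> k" "k \<le> n" "lam \<in> cochar_Gpsi TYPE('k::field_char_0) n k"
  shows "\<exists>b C. \<forall>I\<in>ksubsets n k. lam I = (\<Sum>i\<in>I. b i) + C"
proof -
  have two: "(2::'k) \<noteq> 0" by simp
  from assms(3) two have "(\<lambda>I. (2::'k) powi lam I) \<in> torus_Gpsi n k"
    unfolding cochar_Gpsi_def by blast
  then obtain t z where tnz: "\<forall>i\<le>n. t i \<noteq> (0::'k)" and z: "z \<noteq> 0"
    and eq: "\<forall>I\<in>ksubsets n k. (2::'k) powi lam I = z * (\<Prod>i\<in>I. t i)"
    unfolding torus_Gpsi_def by blast
  define S where "S = (\<lambda>i. SOME S. S \<subseteq> {0..<n} - {i} \<and> card S = k - 1 \<and> finite S)"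
  have S: "S i \<subseteq> {0..<n} - {i} \<and> card (S i) = k - 1 \<and> finite (S i)" if "i < n" for i
    unfolding S_def using someI_ex[OF exS[OF assms(1,2) that]] .
  define b where "b = (\<lambda>i. if i < n then lam (insert i (S i)) - lam (insert n (S i)) else 0)"
  have tn0: "t n \<noteq> 0" using tnz by simp
  have tb: "t i = t n * 2 powi b i" if "i \<le> n" for i
  proof (cases "i < n")
    case False then have "i = n" using that by simp
    then show ?thesis by (simp add: b_def)
  next
    case True
    note Si = S[OF True]
    have fin: "finite (S i)" using Si by blast
    have niS: "i \<notin> S i" "n \<notin> S i" using Si by auto
    have I1: "insert i (S i) \<in> ksubsets n k"
      using Si True assms(1,2) niS by (intro insert_ksub[of k n "S i" i]) auto
    have I2: "insert n (S i) \<in> ksubsets n k"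
      using Si True assms(1,2) niS by (intro insert_ksub[of k n "S i" i]) auto
    define P where "P = z * (\<Prod>j\<in>S i. t j)"
    have P0: "P \<noteq> 0" unfolding P_def using z Si tnz by (auto simp: prod_zero_iff)
    have e1: "2 powi lam (insert i (S i)) = t i * P"
      using eq I1 fin niS by (simp add: P_def)
    have e2: "2 powi lam (insert n (S i)) = t n * P"
      using eq I2 fin niS by (simp add: P_def)
    have "(2::'k) powi b i = 2 powi lam (insert i (S i)) / 2 powi lam (insert n (S i))"
      by (simp add: b_def True power_int_diff)
    also have "\<dots> = t i / t n" using P0 e1 e2 by simp
    finally show ?thesis using tn0 by (simp add: field_simps)
  qed
  define K where "K = z * t n ^ k"
  have key: "(2::'k) powi (lam I - (\<Sum>i\<in>I. b i)) = K" if I: "I \<in> ksubsets n k" for I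
  proof -
    have fI: "finite I" using I by (rule ksub_finite)
    have cI: "card I = k" and sI: "I \<subseteq> {0..n}" using I by (simp_all add: ksubsets_def)
    have "(\<Prod>i\<in>I. t i) = (\<Prod>i\<in>I. t n * 2 powi b i)"
      using sI by (intro prod.cong refl tb) auto
    also have "\<dots> = t n ^ k * (\<Prod>i\<in>I. 2 powi b i)" by (simp add: prod.distrib cI)
    also have "\<dots> = t n ^ k * 2 powi (\<Sum>i\<in>I. b i)" using prod_powi[OF two fI, of b] by simp
    finally have "(2::'k) powi lam I = K * 2 powi (\<Sum>i\<in>I. b i)"
      using eq I by (simp add: K_def mult.assoc)
    then show ?thesis by (simp add: power_int_diff)
  qed
  define I0 where "I0 = {..<k}"
  have I0: "I0 \<in> ksubsets n k" using assms by (auto simp: ksubsets_def I0_def)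
  show ?thesis
  proof (intro exI ballI)
    fix I assume I: "I \<in> ksubsets n k"
    have "lam I - sum b I = lam I0 - sum b I0"
      using key[OF I] key[OF I0] by (intro two_powi_inj[where 'k='k]) simp
    then show "lam I = (\<Sum>i\<in>I. b i) + (lam I0 - sum b I0)" by simp
  qed
qed



lemma sum_ab:
  assumes "1 \<le> k" "k \<le> n" "I \<in> ksubsets n k"
  shows "(\<Sum>i\<le>n. of_int (a i) * gamma n k i I) = (of_int ((\<Sum>i\<in>I. a i) - (\<Sum>i<k-1. a i)) :: rat)"
  using assms by (intro sum_gi) (auto simp: ksubsets_def)

lemma uniq:
  assumes k: "1 \<le> k" "k \<le> n"
    and h: "\<forall>I\<in>ksubsets n k. (\<Sum>i\<le>n. of_int (a i) * gamma n k i I) = (0::rat)"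
  shows "\<forall>i\<le>n. a i = 0"
proof -
  have h': "(\<Sum>i\<in>I. a i) = (\<Sum>i<k-1. a i)" if "I \<in> ksubsets n k" for I
  proof -
    have "(\<Sum>i\<le>n. of_int (a i) * gamma n k i I) = (0::rat)" using h that by blast
    then have "(of_int ((\<Sum>i\<in>I. a i) - (\<Sum>i<k-1. a i)) :: rat) = 0"
      by (subst sum_ab[OF k that, of a, symmetric])
    then show ?thesis by (simp only: of_int_eq_0_iff)
  qed
  have eqn: "a p = a n" if p: "p < n" for p
  proof -
    obtain S where S: "S \<subseteq> {0..<n} - {p}" "card S = k - 1" "finite S"
      using exS[OF k p] by blast
    have np: "p \<notin> S" "n \<notin> S" using S by auto
    have I1: "insert p S \<in> ksubsets n k" using S k np p by (intro insert_ksub[of k n S p]) auto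
    have I2: "insert n S \<in> ksubsets n k" using S k np p by (intro insert_ksub[of k n S p]) auto
    have "a p + sum a S = a n + sum a S"
      using h'[OF I1] h'[OF I2] S(3) np by simp
    then show ?thesis by simp
  qed
  have I0: "{..<k} \<in> ksubsets n k" using k by (auto simp: ksubsets_def)
  have s1: "(\<Sum>i<k. a i) = of_nat k * a n"
    using eqn k by (simp add: sum.cong[of "{..<k}" "{..<k}" a "\<lambda>_. a n"])
  have s2: "(\<Sum>i<k-1. a i) = of_nat (k-1) * a n"
    using eqn k by (simp add: sum.cong[of "{..<k-1}" "{..<k-1}" a "\<lambda>_. a n"])
  have "of_nat k * a n = of_nat (k-1) * a n" using h'[OF I0] s1 s2 by simp
  then have an: "a n = 0" using k by (simp add: of_nat_diff algebra_simps)
  show ?thesis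
  proof (intro allI impI)
    fix i assume "i \<le> n"
    then show "a i = 0" using eqn an by (cases "i < n") auto
  qed
qed

lemma part3:
  fixes lam :: "nat set \<Rightarrow> int"
  assumes k: "1 \<le> k" "k \<le> n"
    and alg_closed: "\<forall>p :: 'k::field_char_0 poly. degree p \<ge> 1 \<longrightarrow> (\<exists>x. poly p x = 0)"
  shows "lam \<in> cochar_Gpsi TYPE('k) n k \<longleftrightarrow>
          (\<exists>a :: nat \<Rightarrow> int. \<forall>I\<in>ksubsets n k. of_int (lam I) = (\<Sum>i\<le>n. of_int (a i) * gamma n k i I))"
proof
  assume "lam \<in> cochar_Gpsi TYPE('k) n k"
  then obtain b C where bC: "\<forall>I\<in>ksubsets n k. lam I = (\<Sum>i\<in>I. b i) + C"
    using cochar_fwd[OF k] by blast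
  define d where "d = C + (\<Sum>i<k-1. b i)"
  define a where "a = (\<lambda>i. b i + d)"
  show "\<exists>a :: nat \<Rightarrow> int. \<forall>I\<in>ksubsets n k. of_int (lam I) = (\<Sum>i\<le>n. of_int (a i) * gamma n k i I)"
  proof (intro exI ballI)
    fix I assume I: "I \<in> ksubsets n k"
    have cI: "card I = k" using I by (simp add: ksubsets_def)
    have "(\<Sum>i\<in>I. a i) - (\<Sum>i<k-1. a i) = (\<Sum>i\<in>I. b i) + of_nat k * d - (\<Sum>i<k-1. b i) - of_nat (k-1) * d"
      by (simp add: a_def sum.distrib cI)
    also have "\<dots> = lam I" using bC I k by (simp add: d_def of_nat_diff algebra_simps)
    finally show "of_int (lam I) = (\<Sum>i\<le>n. of_int (a i) * gamma n k i I)"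
      using sum_ab[OF k I, of a] by simp
  qed
next
  assume "\<exists>a :: nat \<Rightarrow> int. \<forall>I\<in>ksubsets n k. of_int (lam I) = (\<Sum>i\<le>n. of_int (a i) * gamma n k i I)"
  then obtain a where a: "\<forall>I\<in>ksubsets n k. of_int (lam I) = (\<Sum>i\<le>n. of_int (a i) * gamma n k i I)"
    by blast
  have "\<forall>I\<in>ksubsets n k. lam I = (\<Sum>i\<in>I. a i) + (- (\<Sum>i<k-1. a i))"
  proof
    fix I assume I: "I \<in> ksubsets n k"
    have "(of_int (lam I) :: rat) = of_int ((\<Sum>i\<in>I. a i) - (\<Sum>i<k-1. a i))"
      using a I sum_ab[OF k I, of a] by simp
    then show "lam I = (\<Sum>i\<in>I. a i) + (- (\<Sum>i<k-1. a i))" by (simp only: of_int_eq_iff)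
  qed
  then show "lam \<in> cochar_Gpsi TYPE('k) n k" by (rule cochar_rev[OF alg_closed])
qed

theorem proposition3p5:
  fixes n k :: nat
  assumes "1 \<le> k" and "k \<le> n"
    and alg_closed: "\<forall>p :: 'k::field_char_0 poly. degree p \<ge> 1 \<longrightarrow> (\<exists>x. poly p x = 0)"
  shows "(\<forall>i\<le>n. \<forall>I\<in>ksubsets n k. gamma n k i I \<in> \<int>)
    \<and> (\<forall>i\<le>n. \<exists>lam\<in>cochar_Gpsi TYPE('k) n k. \<forall>I\<in>ksubsets n k. of_int (lam I) = gamma n k i I)
    \<and> (\<forall>lam. lam \<in> cochar_Gpsi TYPE('k) n k \<longleftrightarrow>
          (\<exists>a :: nat \<Rightarrow> int. \<forall>I\<in>ksubsets n k. of_int (lam I) = (\<Sum>i\<le>n. of_int (a i) * gamma n k i I)))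
    \<and> (\<forall>a :: nat \<Rightarrow> int. (\<forall>I\<in>ksubsets n k. (\<Sum>i\<le>n. of_int (a i) * gamma n k i I) = 0)
          \<longrightarrow> (\<forall>i\<le>n. a i = 0))"
proof (intro conjI allI impI ballI)
  fix i I show "gamma n k i I \<in> \<int>" by (simp add: gamma_gi)
next
  fix i assume i: "i \<le> n"
  define lam where "lam = (\<lambda>I. gi k i I)"
  have "\<forall>I\<in>ksubsets n k. lam I = (\<Sum>j\<in>I. (\<lambda>j. if j = i then 1 else 0) j) + (- (if i + 2 \<le> k then 1 else 0))"
  proof
    fix I assume I: "I \<in> ksubsets n k"
    have fI: "finite I" using I by (rule ksub_finite)
    show "lam I = (\<Sum>j\<in>I. (\<lambda>j. if j = i then 1 else 0) j) + (- (if i + 2 \<le> k then 1 else 0))"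
      using fI by (simp add: lam_def gi_def)
  qed
  then have "lam \<in> cochar_Gpsi TYPE('k) n k" by (rule cochar_rev[OF alg_closed])
  then show "\<exists>lam\<in>cochar_Gpsi TYPE('k) n k. \<forall>I\<in>ksubsets n k. of_int (lam I) = gamma n k i I"
    by (intro bexI[of _ lam]) (auto simp: lam_def gamma_gi)
next
  fix lam :: "nat set \<Rightarrow> int"
  show "lam \<in> cochar_Gpsi TYPE('k) n k \<longleftrightarrow>
          (\<exists>a :: nat \<Rightarrow> int. \<forall>I\<in>ksubsets n k. of_int (lam I) = (\<Sum>i\<le>n. of_int (a i) * gamma n k i I))"
    by (rule part3[OF assms])
next
  fix a :: "nat \<Rightarrow> int" and i
  assume "\<forall>I\<in>ksubsets n k. (\<Sum>i\<le>n. of_int (a i) * gamma n k i I) = 0" "i \<le> n"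
  then show "a i = 0" using uniq[OF assms(1,2), of a] by blast
qed


end
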